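(* Let $s_1\in\mathbb{Q}$ with $0<s_1<1$, $u_1=\frac{1-s_1^2}{2s_1}$, let $m\in\mathbb{Q}$ with $0<m<\sqrt2-1$, and let $\alpha\in(0,\pi/4)$ be the angle with $\cos\alpha=\frac{1-m^2}{1+m^2}$, $\sin\alpha=\frac{2m}{1+m^2}$. Define $$s_2=2u_1\cot(2\alpha),\qquad s_3=\frac{\cos\alpha-\sin\alpha}{s_2},\qquad s_4=\frac{s_2}{\cos\alpha+\sin\alpha}.$$ Then $s_3\neq s_4$. (Equivalently, in the family of rational leaning boxes of Theorem 1 the two diagonals $c_1,c_2$ of the parallelogram face are never equal, so this family contains no perfect cuboid.)
   Context: In the family of Theorem 1 one sets $u_k=\frac{1-s_k^2}{2s_k}$, and the parallelogram face of the leaning box has diagonals proportional to $u_3$ and $u_4$; $s_3=s_4$ is equivalent to $u_3=u_4$, i.e. to that face being a rectangle. *)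

theory Defs
  imports "HOL-Analysis.Analysis"
begin

end

theory Submission
  imports Defs "HOL-Computational_Algebra.Nth_Powers"
begin


lemma sq_split:
  fixes a b c :: nat
  assumes "coprime a b" "a * b = c^2"
  shows "\<exists>u v. a = u^2 \<and> b = v^2"
proof (cases "a = 0 \<or> b = 0")
  case True
  then show ?thesis using assms(1)
    by (metis coprime_0_left_iff coprime_0_right_iff nat_dvd_1_iff_1 one_power2 zero_power2 dvd_refl)
next
  case False
  then have "a > 0" "b > 0" by auto
  have "is_nth_power 2 (a* b)" using assms(2) by auto
  from is_nth_power_mult_coprime_natD[OF assms(1) this \<open>a>0\<close> \<open>b>0\<close>]
  show ?thesis by (auto elim!: is_nth_powerE)
qed

lemma coprime_ac:
  fixes a b c :: nat
  assumes "a^2 + b^2 = c^2" "coprime a b"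
  shows "coprime a c"
proof (rule coprimeI)
  fix d assume d: "d dvd a" "d dvd c"
  have "d dvd c^2" "d dvd a^2" using d by (auto simp: power2_eq_square)
  then have "d dvd c^2 - a^2" by (rule dvd_diff_nat)
  then have "d dvd b^2" using assms(1) by (metis add_diff_cancel_left')
  moreover have "coprime a (b^2)" using assms(2) by simp
  ultimately show "is_unit d" using d(1) coprime_common_divisor by blast
qed

lemma pyth:
  fixes a b c :: nat
  assumes "a^2 + b^2 = c^2" "coprime a b" "even b"
  shows "\<exists>m n. a = m^2 - n^2 \<and> b = 2* m* n \<and> c = m^2 + n^2 \<and> coprime m n \<and> n \<le> m"
proof -
  have oa: "odd a" using assms(2,3) by (metis coprime_common_divisor_nat even_numeral one_eq_numeral_iff numeral_One semiring_norm(85) dvd_refl odd_one)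
  have oc: "odd c"
  proof
    assume "even c" then have "even (c^2)" by simp
    moreover have "odd (a^2 + b^2)" using oa assms(3) by simp
    ultimately show False using assms(1) by simp
  qed
  have "a^2 \<le> c^2" using assms(1) by linarith
  then have ac: "a \<le> c" by (simp add: power2_nat_le_eq_le)
  obtain w where w: "b = 2* w" using assms(3) by blast
  define p where "p = (c + a) div 2"
  define q where "q = (c - a) div 2"
  have p2: "c + a = 2* p" unfolding p_def using oa oc by simp
  have q2: "c - a = 2* q" unfolding q_def using oa oc ac by (simp add: dvd_diff_nat)
  have cpq: "c = p + q" "a = p - q" "q \<le> p" using p2 q2 ac by auto
  obtain k where k: "c = a + k" using ac le_Suc_ex by blast
  have "(c+a)*(c-a) = c^2 - a^2" by (simp add: k power2_eq_square algebra_simps)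
  also have "\<dots> = b^2" using assms(1) by simp
  finally have "(2* p)*(2* q) = (2* w)^2" unfolding p2[symmetric] q2[symmetric] w by simp
  then have "4*(p* q) = 4* w^2" by (simp add: power2_eq_square algebra_simps)
  then have pq: "p* q = w^2" by simp
  have cp: "coprime p q"
  proof (rule coprimeI)
    fix d assume d: "d dvd p" "d dvd q"
    then have "d dvd c" "d dvd a" using cpq by (auto simp: dvd_diff_nat)
    moreover have "coprime a c" using coprime_ac[OF assms(1,2)] .
    ultimately show "is_unit d" using coprime_common_divisor by blast
  qed
  obtain m n where mn: "p = m^2" "q = n^2" using sq_split[OF cp pq] by blast
  have nm: "n \<le> m" using cpq(3) mn by (simp add: power2_nat_le_eq_le)
  have "b^2 = (2* m* n)^2" using pq w mn by (simp add: power2_eq_square algebra_simps)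
  then have "b = 2* m* n" by (simp add: power2_eq_iff)
  moreover have "coprime m n" using cp mn by simp
  ultimately show ?thesis using cpq mn nm by auto
qed

lemma sq_mod4: "(n::nat)^2 mod 4 = (if even n then 0 else 1)"
proof (cases "even n")
  case True then obtain k where "n = 2* k" by blast
  then show ?thesis by (simp add: power2_eq_square)
next
  case False then obtain k where "n = 2* k+1" using oddE by blast
  then have "n^2 = 4*(k* k+k) + 1" by (simp add: power2_eq_square algebra_simps)
  then show ?thesis using False by simp
qed

lemma no_fermat:
  fixes x y z :: nat
  shows "x^4 = y^4 + z^2 \<Longrightarrow> y > 0 \<Longrightarrow> z > 0 \<Longrightarrow> False"
proof (induction x arbitrary: y z rule: less_induct)
  case (less x)
  have x0: "x > 0" using less.prems by (metis add_is_0 gr0I power_eq_0_iff zero_less_numeral zero_less_power)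
  show False
  proof (cases "coprime x y")
    case False
    define d where "d = gcd x y"
    have d1: "d > 1" using False x0 unfolding d_def
      by (metis coprime_iff_gcd_eq_1 gcd_pos_nat less_one nat_neq_iff)
    obtain x' y' where xy: "x = d* x'" "y = d* y'" unfolding d_def by (meson gcd_dvd1 gcd_dvd2 dvdE)
    have "d^4 * x'^4 = d^4 * y'^4 + z^2" using less.prems(1) xy by (simp add: power_mult_distrib)
    then have "d^4 dvd z^2" by (metis dvd_add_right_iff dvd_triv_left)
    then have "(d^2)^2 dvd z^2" by (simp add: power_mult[symmetric])
    then have "d^2 dvd z" using pow_divides_pow_iff[of 2 "d^2" z] by simp
    then obtain z' where z': "z = d^2 * z'" by blast
    have "d^4 * x'^4 = d^4 * (y'^4 + z'^2)"
      using \<open>d^4 * x'^4 = d^4 * y'^4 + z^2\<close> z' by (simp add: power_mult_distrib power_mult[symmetric] algebra_simps)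
    then have e: "x'^4 = y'^4 + z'^2" using d1 by simp
    have "x' < x" using xy d1 x0 by simp
    moreover have "y' > 0" "z' > 0" using less.prems xy z' by auto
    ultimately show False using less.IH e by blast
  next
    case cxy: True
    have cyz: "coprime (y^2) z"
    proof (rule coprimeI)
      fix d assume d: "d dvd y^2" "d dvd z"
      then have "d dvd y^4" "d dvd z^2" by (auto simp: power2_eq_square numeral_eq_Suc)
      then have "d dvd x^4" using less.prems(1) by simp
      moreover have "coprime (x^4) (y^2)" using cxy by simp
      ultimately show "is_unit d" using d(1) coprime_common_divisor by blast
    qed
    have eq: "(y^2)^2 + z^2 = (x^2)^2" using less.prems(1) by (simp add: power_mult[symmetric])
    show False
    proof (cases "even y")
      case False
      have ez: "even z"
      proof (rule ccontr)
        assume oz: "odd z"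
        have "(x^2)^2 mod 4 = ((y^2)^2 + z^2) mod 4" using eq by simp
        also have "\<dots> = ((y^2)^2 mod 4 + z^2 mod 4) mod 4" by (simp add: mod_add_eq)
        also have "\<dots> = 2" using False oz sq_mod4[of "y^2"] sq_mod4[of z] by simp
        finally show False using sq_mod4[of "x^2"] by (simp split: if_splits)
      qed
      obtain m n where mn: "y^2 = m^2 - n^2" "z = 2* m* n" "x^2 = m^2+n^2" "n \<le> m"
        using pyth[OF eq cyz ez] by blast
      have n0: "n > 0" "m > 0" using mn(2) less.prems(3) by auto
      have "n^2 \<le> m^2" using mn(4) by (simp add: power_mono)
      then obtain t where t: "m^2 = n^2 + t" using le_Suc_ex by blast
      have "m^2* m^2 = n^2* n^2 + (m^2-n^2)*(m^2+n^2)" unfolding t by (simp add: algebra_simps)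
      then have e: "m^4 = n^4 + (x* y)^2" using mn by (simp add: power_mult_distrib power_mult[symmetric] mult_ac)
      have "m^2 < x^2" using mn(3) n0 by simp
      then have "m < x" by (simp add: power_less_imp_less_base)
      moreover have "x* y > 0" using x0 less.prems by simp
      ultimately show False using less.IH e n0 by blast
    next
      case ey: True
      have oz: "odd z"
      proof
        assume "even z"
        moreover have "even (y^2)" using ey by simp
        ultimately have "is_unit (2::nat)" using cyz coprime_common_divisor by blast
        then show False by simp
      qed
      have eq2: "z^2 + (y^2)^2 = (x^2)^2" using eq by simp
      have cz: "coprime z (y^2)" using cyz by (simp add: coprime_commute)
      obtain m n where mn: "z = m^2 - n^2" "y^2 = 2* m* n" "x^2 = m^2+n^2" "coprime m n"
        using pyth[OF eq2 cz] ey by auto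
      have "y^2 \<noteq> 0" using less.prems(2) by simp
      then have mn0: "m > 0" "n > 0" using mn(2) by (auto simp: gr0I)
      obtain w where w: "y = 2* w" using ey by blast
      have key: False if h: "coprime pp e" "even e" "pp > 0" "e > 0" "2* pp* e = y^2" "x^2 = pp^2+e^2" for pp e
      proof -
        obtain k where k: "e = 2* k" using h(2) by blast
        have "4*(pp* k) = 4* w^2" using h(5) k w by (simp add: power2_eq_square algebra_simps)
        then have ok: "pp* k = w^2" by simp
        have cok: "coprime pp k" using h(1) k by simp
        obtain s r where sr: "pp = s^2" "k = r^2" using sq_split[OF cok ok] by blast
        have eq3: "(s^2)^2 + (2* r^2)^2 = x^2" using h(6) sr k by simp
        have c3: "coprime (s^2) (2* r^2)" using h(1) sr k by simp
        obtain u v where uv: "s^2 = u^2 - v^2" "2* r^2 = 2* u* v" "x = u^2+v^2" "coprime u v" "v \<le> u"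
          using pyth[OF eq3 c3] by auto
        have r0: "r > 0" using h(4) k sr by (auto simp: gr0I)
        have "u* v \<noteq> 0" using uv(2) r0 by (metis mult_cancel_left mult.assoc power_not_zero zero_neq_numeral not_gr0)
        then have uv0: "u > 0" "v > 0" by auto
        have "u* v = r^2" using uv(2) by simp
        obtain a b where ab: "u = a^2" "v = b^2" using sq_split[OF uv(4) \<open>u* v = r^2\<close>] by blast
        have "u^2 = v^2 + s^2" using uv(1,5) by (simp add: power_mono)
        then have e: "a^4 = b^4 + s^2" using ab by (simp add: power_mult[symmetric])
        have s0: "s > 0" using h(3) sr by (auto simp: gr0I)
        have b0: "b > 0" using uv0 ab by (auto simp: gr0I)
        have a0: "a > 0" using uv0 ab by (auto simp: gr0I)
        have "a \<le> a^4" using a0 by (simp add: self_le_power)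
        also have "a^4 = u^2" using ab by (simp add: power_mult[symmetric])
        also have "u^2 < x" using uv(3) uv0 by simp
        finally have "a < x" .
        then show False using less.IH e s0 b0 by blast
      qed
      show False
      proof (cases "even n")
        case True
        then show False using key[of m n] mn mn0 by auto
      next
        case False
        have "even (2* m* n)" by simp
        have "4 dvd y^2" using w by (simp add: power2_eq_square)
        then have "4 dvd 2* m* n" using mn(2) by simp
        then have "even (m* n)" by (metis dvd_mult_cancel_left mult.assoc nat_mult_dvd_cancel_disj numeral_Bit0_eq_double one_plus_numeral semiring_norm(2) zero_neq_numeral numeral_One mult_2)
        then have "even m" using False by simp
        then show False using key[of n m] mn mn0 by (auto simp: coprime_commute add.commute mult_ac)
      qed
    qed
  qed
qed



lemma no_rat:
  fixes A B W :: real
  assumes "A \<in> \<rat>" "B \<in> \<rat>" "W \<in> \<rat>" "B \<noteq> 0" "W \<noteq> 0" "A^4 = B^4 + W^2"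
  shows False
proof -
  obtain a p where ap: "p \<noteq> 0" "\<bar>A\<bar> = real a / real p" using Rats_abs_nat_div_natE[OF assms(1)] by metis
  obtain b q where bq: "q \<noteq> 0" "\<bar>B\<bar> = real b / real q" using Rats_abs_nat_div_natE[OF assms(2)] by metis
  obtain w r where wr: "r \<noteq> 0" "\<bar>W\<bar> = real w / real r" using Rats_abs_nat_div_natE[OF assms(3)] by metis
  have e: "\<bar>A\<bar>^4 = \<bar>B\<bar>^4 + \<bar>W\<bar>^2" using assms(6) by (simp add: power_even_abs_numeral)
  define X where "X = a* q* r"
  define Y where "Y = p* b* r"
  define Z where "Z = p* q* r* p* q* w"
  have "real X = real (p* q* r) * \<bar>A\<bar>" "real Y = real (p* q* r) * \<bar>B\<bar>"
       "real Z = real (p* q* r)^2 * \<bar>W\<bar>"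
    using ap bq wr by (simp_all add: X_def Y_def Z_def field_simps power2_eq_square)
  then have "real (X^4) = real (Y^4 + Z^2)" using e
    by (simp add: power_mult_distrib power_mult[symmetric] algebra_simps)
  then have "X^4 = Y^4 + Z^2" by (simp only: of_nat_eq_iff)
  moreover have "b \<noteq> 0" using bq(2) assms(4) by (cases "b = 0") auto
  moreover have "w \<noteq> 0" using wr(2) assms(5) by (cases "w = 0") auto
  ultimately have "X^4 = Y^4 + Z^2" "b \<noteq> 0" "w \<noteq> 0" by auto
  then have "Y > 0" "Z > 0" using ap bq wr by (auto simp: Y_def Z_def)
  then show False using no_fermat \<open>X^4 = Y^4 + Z^2\<close> by blast
qed

theorem theorem2:
  fixes s1 m \<alpha> :: real
  assumes "s1 \<in> \<rat>" and "0 < s1" and "s1 < 1"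
    and "m \<in> \<rat>" and "0 < m" and "m < sqrt 2 - 1"
    and "0 < \<alpha>" and "\<alpha> < pi / 4"
    and "cos \<alpha> = (1 - m\<^sup>2) / (1 + m\<^sup>2)"
    and "sin \<alpha> = 2 * m / (1 + m\<^sup>2)"
  shows "let u1 = (1 - s1\<^sup>2) / (2 * s1);
             s2 = 2 * u1 * cot (2 * \<alpha>);
             s3 = (cos \<alpha> - sin \<alpha>) / s2;
             s4 = s2 / (cos \<alpha> + sin \<alpha>)
         in s3 \<noteq> s4"
proof -
  define u1 where "u1 = (1 - s1\<^sup>2) / (2 * s1)"
  define cc where "cc = cos \<alpha>"
  define ss where "ss = sin \<alpha>"
  define A where "A = 1 - m^2"
  define B where "B = 2* m"
  define D where "D = 1 + m^2"
  have D0: "D > 0" unfolding D_def by (simp add: add_pos_nonneg)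
  have cA: "cc = A / D" and sB: "ss = B / D" using assms(9,10) by (simp_all add: cc_def ss_def A_def B_def D_def)
  have "m + 1 < sqrt 2" using assms(6) by simp
  then have "(m+1)^2 < (sqrt 2)^2" using assms(5) by (intro power_strict_mono) auto
  then have "(m+1)^2 < 2" by simp
  then have AB: "A > B" unfolding A_def B_def by (simp add: power2_eq_square algebra_simps)
  have B0: "B > 0" using assms(5) by (simp add: B_def)
  have "s1^2 < 1" using assms(2,3) by (simp add: power_less_one_iff abs_less_iff)
  then have u0: "u1 > 0" unfolding u1_def using assms(2) by simp
  have c0: "cc > 0" "ss > 0" using AB B0 D0 cA sB by auto
  have cs: "cc^2 - ss^2 > 0" unfolding cA sB using AB B0 D0
    by (simp add: power_divide divide_strict_right_mono power_strict_mono)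
  have cot: "cot (2*\<alpha>) = (cc^2 - ss^2) / (2* ss* cc)"
    by (simp add: cot_def cos_double sin_double cc_def ss_def)
  define s2 where "s2 = 2 * u1 * cot (2 * \<alpha>)"
  have s2: "s2 = u1 * (cc^2 - ss^2) / (ss* cc)" unfolding s2_def cot using c0 by (simp add: field_simps)
  have s20: "s2 > 0" unfolding s2 using u0 cs c0 by simp
  have "(cc - ss) / s2 \<noteq> s2 / (cc + ss)"
  proof
    assume h: "(cc - ss) / s2 = s2 / (cc + ss)"
    define K where "K = cc^2 - ss^2"
    define P where "P = ss * cc"
    have P0: "P > 0" using c0 unfolding P_def by simp
    have "(cc - ss) * (cc + ss) = s2 * s2" using h s20 c0 by (simp add: field_simps)
    moreover have "s2 = u1 * K / P" unfolding s2 K_def P_def ..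
    moreover have "(cc - ss) * (cc + ss) = K" unfolding K_def by (simp add: power2_eq_square algebra_simps)
    ultimately have "K = (u1 * K / P)^2" by (simp add: power2_eq_square)
    then have "K * P^2 = u1^2 * K * K" using P0 by (simp add: power_divide field_simps power2_eq_square)
    then have "K * P^2 = K * (u1^2 * K)" by (simp add: algebra_simps)
    then have "P^2 = u1^2 * K" using cs unfolding K_def by simp
    then have "(ss* cc)^2 = u1^2 * (cc^2 - ss^2)" unfolding P_def K_def .
    then have "(A* B)^2 = u1^2 * (A^2 - B^2) * D^2" unfolding cA sB using D0
      by (simp add: field_simps power2_eq_square)
    moreover have "D^2 = A^2 + B^2" unfolding A_def B_def D_def by (simp add: power2_eq_square algebra_simps)
    ultimately have "(A* B)^2 = u1^2 * ((A^2 - B^2) * (A^2 + B^2))" by (simp add: mult.assoc)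
    moreover have "(A^2 - B^2) * (A^2 + B^2) = A^4 - B^4" by (simp add: algebra_simps power2_eq_square power4_eq_xxxx)
    ultimately have "(A* B)^2 = u1^2 * (A^4 - B^4)" by simp
    then have e: "A^4 = B^4 + (A* B/u1)^2" using u0 by (simp add: field_simps)
    have "A \<in> \<rat>" "B \<in> \<rat>" "u1 \<in> \<rat>" using assms(1,4) unfolding A_def B_def u1_def by auto
    then have "A* B/u1 \<in> \<rat>" by auto
    moreover have "A* B/u1 \<noteq> 0" using AB B0 u0 by simp
    ultimately show False using no_rat[OF \<open>A \<in> \<rat>\<close> \<open>B \<in> \<rat>\<close> _ _ _ e] B0 by auto
  qed
  then show ?thesis unfolding Let_def u1_def[symmetric] s2_def[symmetric] cc_def ss_def .
qed

end
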